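(* Let $r \le \min(M,N)$ be positive integers and let $\mathcal{P}=\mathcal{B}_1=\{\mathbf{x}\in\mathbb{R}^r \mid \|\mathbf{x}\|_1\le 1\}$. Let $\mathbf{H}_g\in\mathbb{R}^{M\times r}$ have full column rank, let $\mathbf{S}_g\in\mathbb{R}^{r\times N}$ have all of its columns in $\mathcal{P}$, and set $\mathbf{Y}=\mathbf{H}_g\mathbf{S}_g$. Suppose $\mathbf{S}_g$ is a sufficiently scattered factor corresponding to $\mathcal{P}$ (as defined in the context). Consider the Det-Max optimization problem $$\max_{\mathbf{H}\in\mathbb{R}^{M\times r},\ \mathbf{S}\in\mathbb{R}^{r\times N}} \det(\mathbf{S}\mathbf{S}^T)\quad\text{subject to}\quad \mathbf{Y}=\mathbf{H}\mathbf{S},\ \ \mathbf{S}_{:,j}\in\mathcal{P}\ \ (j=1,\dots,N).$$ Then every global optimum $(\mathbf{H}_*,\mathbf{S}_* )$ of this problem satisfies $$\mathbf{H}_*=\mathbf{H}_g\boldsymbol{\Pi}^T\mathbf{D},\qquad \mathbf{S}_*=\mathbf{D}\boldsymbol{\Pi}\mathbf{S}_g,$$ for some permutation matrix $\boldsymbol{\Pi}\in\mathbb{R}^{r\times r}$ and some diagonal matrix $\mathbf{D}\in\mathbb{R}^{r\times r}$ with diagonal entries in $\{-1,+1\}$.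
   Context: $\mathbf{S}_{:,j}$ denotes the $j$-th column of $\mathbf{S}$; $\mathrm{conv}(\mathbf{S})$ is the convex hull of the columns of $\mathbf{S}$. For a convex polytope $\mathcal{P}\subset\mathbb{R}^r$ with nonempty interior, $\mathcal{E}_\mathcal{P}$ denotes its maximum volume inscribed ellipsoid (MVIE), i.e. the (unique) ellipsoid of maximal volume contained in $\mathcal{P}$, written $\mathcal{E}_\mathcal{P}=\{\mathbf{C}_\mathcal{P}\mathbf{u}+\mathbf{g}_\mathcal{P}\mid \|\mathbf{u}\|_2\le 1\}$ with $\mathbf{C}_\mathcal{P}\succeq 0$ and center $\mathbf{g}_\mathcal{P}$. For a set $C\subset\mathbb{R}^r$ and point $\mathbf{d}$, the polar of $C$ with respect to $\mathbf{d}$ is $C^{*,\mathbf{d}}=\{\mathbf{x}\in\mathbb{R}^r\mid \langle\mathbf{x},\mathbf{y}-\mathbf{d}\rangle\le 1\ \forall \mathbf{y}\in C\}$. $\mathrm{bd}(\cdot)$ denotes boundary and $\mathrm{ext}(\cdot)$ the set of extreme points (vertices). A matrix $\mathbf{S}\in\mathbb{R}^{r\times N}$ is called a sufficiently scattered factor corresponding to $\mathcal{P}$ if (i) $\mathcal{P}\supseteq\mathrm{conv}(\mathbf{S})\supset\mathcal{E}_\mathcal{P}$, and (ii) $\mathrm{conv}(\mathbf{S})^{*,\mathbf{g}_\mathcal{P}}\cap\mathrm{bd}(\mathcal{E}_\mathcal{P}^{*,\mathbf{g}_\mathcal{P}})=\mathrm{ext}(\mathcal{P}^{*,\mathbf{g}_\mathcal{P}})$.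 *)

theory Defs
  imports "HOL-Analysis.Analysis"
begin

definition ellipsoid :: "real^'r^'r \<Rightarrow> real^'r \<Rightarrow> (real^'r) set" where
  "ellipsoid C g = {C *v u + g | u. norm u \<le> 1}"

definition psd_matrix :: "real^'r^'r \<Rightarrow> bool" where
  "psd_matrix C \<longleftrightarrow> transpose C = C \<and> (\<forall>x. 0 \<le> x \<bullet> (C *v x))"

definition is_MVIE :: "(real^'r) set \<Rightarrow> real^'r^'r \<Rightarrow> real^'r \<Rightarrow> bool" where
  "is_MVIE P C g \<longleftrightarrow> psd_matrix C \<and> ellipsoid C g \<subseteq> P \<and>
     (\<forall>C' g'. psd_matrix C' \<and> ellipsoid C' g' \<subseteq> P \<longrightarrow>
        measure lebesgue (ellipsoid C' g') \<le> measure lebesgue (ellipsoid C g))"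

definition polar_wrt :: "(real^'r) set \<Rightarrow> real^'r \<Rightarrow> (real^'r) set" where
  "polar_wrt C d = {x. \<forall>y\<in>C. x \<bullet> (y - d) \<le> 1}"

definition sufficiently_scattered :: "(real^'r) set \<Rightarrow> real^'n^'r \<Rightarrow> bool" where
  "sufficiently_scattered P S \<longleftrightarrow>
     (\<exists>C g. is_MVIE P C g \<and>
        convex hull (columns S) \<subseteq> P \<and>
        ellipsoid C g \<subseteq> convex hull (columns S) \<and>
        polar_wrt (convex hull (columns S)) g \<inter> frontier (polar_wrt (ellipsoid C g) g)
          = {x. x extreme_point_of (polar_wrt P g)})"

definition l1_ball :: "(real^'r) set" where
  "l1_ball = {x. (\<Sum>i\<in>UNIV. \<bar>x $ i\<bar>) \<le> 1}"

definition permutation_matrix :: "real^'r^'r \<Rightarrow> bool" where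
  "permutation_matrix Q \<longleftrightarrow>
     (\<exists>p. p permutes (UNIV :: 'r set) \<and> Q = (\<chi> i j. if p i = j then 1 else 0))"

definition sign_diagonal :: "real^'r^'r \<Rightarrow> bool" where
  "sign_diagonal D \<longleftrightarrow>
     (\<exists>d. (\<forall>i. d i = 1 \<or> d i = -1) \<and> D = (\<chi> i j. if i = j then d i else 0))"

definition detmax_feasible :: "real^'n^'m \<Rightarrow> (real^'r) set \<Rightarrow> real^'r^'m \<Rightarrow> real^'n^'r \<Rightarrow> bool" where
  "detmax_feasible Y P H S \<longleftrightarrow> Y = H ** S \<and> (\<forall>j. column j S \<in> P)"

definition detmax_optimal :: "real^'n^'m \<Rightarrow> (real^'r) set \<Rightarrow> real^'r^'m \<Rightarrow> real^'n^'r \<Rightarrow> bool" where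
  "detmax_optimal Y P H S \<longleftrightarrow> detmax_feasible Y P H S \<and>
     (\<forall>H' S'. detmax_feasible Y P H' S' \<longrightarrow>
        det (S' ** transpose S') \<le> det (S ** transpose S))"

end

theory Submission
  imports Defs
begin

lemma norm_sq_vec: "(norm (x::real^'n))^2 = (\<Sum>i\<in>UNIV. (x$i)^2)"
  by (simp add: norm_vec_def L2_set_def sum_nonneg)

lemma norm_sq_mat: "(norm (M::real^'n^'k))^2 = (\<Sum>i\<in>UNIV. (norm (M$i))^2)"
  by (simp add: norm_vec_def L2_set_def sum_nonneg)

lemma row_eq: "row i A = A $ i"
  by (simp add: row_def vec_eq_iff)

lemma det_scaleR_mat: "det (c *\<^sub>R (A::real^'n^'n)) = c ^ CARD('n) * det A"
proof -
  have "c *\<^sub>R A = (c *\<^sub>R mat 1) ** A"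
    by (simp flip: scalar_matrix_assoc)
  moreover have "det ((c *\<^sub>R mat 1) :: real^'n^'n) = c ^ CARD('n)"
    by (subst det_diagonal) (auto simp: mat_def)
  ultimately show ?thesis by (simp add: det_mul)
qed

lemma mmt_entry: "(M ** transpose M) $ i $ k = (M$i) \<bullet> (M$k)" for M :: "real^'n^'m"
  by (simp add: matrix_matrix_mult_def transpose_def inner_vec_def)

lemma det_orth_rows:
  fixes M :: "real^'n^'n"
  assumes "\<And>i k. i \<noteq> k \<Longrightarrow> M$i \<bullet> M$k = 0"
  shows "(det M)^2 = (\<Prod>i\<in>UNIV. M$i \<bullet> M$i)"
proof -
  have "(det M)^2 = det (M ** transpose M)"
    by (simp add: det_mul power2_eq_square)
  also have "\<dots> = (\<Prod>i\<in>UNIV. (M ** transpose M)$i$i)"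
    by (rule det_diagonal) (simp add: mmt_entry assms)
  finally show ?thesis by (simp add: mmt_entry)
qed

lemma amgm:
  fixes x :: "'n::finite \<Rightarrow> real"
  assumes "\<And>i. x i \<ge> 0"
  shows "(\<Prod>i\<in>UNIV. x i) \<le> ((\<Sum>i\<in>UNIV. x i) / CARD('n))^CARD('n)"
proof (cases "(\<Prod>i\<in>UNIV. x i) = 0")
  case True
  have "0 \<le> ((\<Sum>i\<in>UNIV. x i) / CARD('n))^CARD('n)"
    by (intro zero_le_power divide_nonneg_nonneg sum_nonneg assms) auto
  then show ?thesis using True by linarith
next
  case False
  let ?n = "CARD('n)"
  have pos: "(\<Prod>i\<in>UNIV. x i) > 0"
    using False assms by (simp add: less_le prod_nonneg)
  have "(\<Prod>i\<in>UNIV. x i) powr (1 / ?n) \<le> (\<Sum>i\<in>UNIV. x i / ?n)"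
    using arith_geom_mean[of UNIV x] assms by simp
  also have "\<dots> = (\<Sum>i\<in>UNIV. x i) / ?n" by (simp add: sum_divide_distrib)
  finally have le: "(\<Prod>i\<in>UNIV. x i) powr (1 / ?n) \<le> (\<Sum>i\<in>UNIV. x i) / ?n" .
  have "((\<Prod>i\<in>UNIV. x i) powr (1 / ?n)) ^ ?n = ((\<Prod>i\<in>UNIV. x i) powr (1 / ?n)) powr (real ?n)"
    by (rule powr_realpow[symmetric]) (metis pos less_irrefl powr_gt_zero)
  also have "\<dots> = (\<Prod>i\<in>UNIV. x i) powr (1 / ?n * ?n)"
    by (simp add: powr_powr)
  also have "\<dots> = (\<Prod>i\<in>UNIV. x i)" using pos by simp
  finally have "(\<Prod>i\<in>UNIV. x i) = ((\<Prod>i\<in>UNIV. x i) powr (1 / ?n)) ^ ?n" by simp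
  also have "\<dots> \<le> ((\<Sum>i\<in>UNIV. x i) / ?n) ^ ?n"
    by (rule power_mono[OF le]) simp
  finally show ?thesis .
qed

lemma amgm_eq:
  fixes x :: "'n::finite \<Rightarrow> real"
  assumes nn: "\<And>i. x i \<ge> 0" and s: "(\<Sum>i\<in>UNIV. x i) \<le> 1"
    and p: "(\<Prod>i\<in>UNIV. x i) \<ge> (1 / CARD('n))^CARD('n)"
  shows "x i = 1 / CARD('n)"
proof -
  let ?n = "CARD('n)"
  have ppos: "(\<Prod>i\<in>UNIV. x i) > 0"
  proof -
    have "(0::real) < (1 / ?n)^?n" by simp
    then show ?thesis using p by linarith
  qed
  have xpos: "x j > 0" for j
  proof (rule ccontr)
    assume "\<not> x j > 0"
    then have "x j = 0" using nn[of j] by simp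
    then have "(\<Prod>i\<in>UNIV. x i) = 0" by (simp add: prod_zero_iff) blast
    then show False using ppos by linarith
  qed
  have eq: "x j = x k" for j k
  proof (rule ccontr)
    assume ne: "x j \<noteq> x k"
    then have jk: "j \<noteq> k" by auto
    define m where "m = (x j + x k) / 2"
    define y where "y = x(j := m, k := m)"
    have ynn: "y i \<ge> 0" for i using nn xpos by (simp add: y_def m_def add_nonneg_nonneg)
    have R: "UNIV - {j} - {k} = (UNIV::'n set) - {j, k}" by auto
    have sx: "(\<Sum>i\<in>UNIV. x i) = x j + x k + (\<Sum>i\<in>UNIV - {j, k}. x i)"
      using jk by (simp add: sum.remove[of UNIV j] sum.remove[of "UNIV - {j}" k] R)
    have sy: "(\<Sum>i\<in>UNIV. y i) = y j + y k + (\<Sum>i\<in>UNIV - {j, k}. y i)"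
      using jk by (simp add: sum.remove[of UNIV j] sum.remove[of "UNIV - {j}" k] R)
    have px: "(\<Prod>i\<in>UNIV. x i) = x j * x k * (\<Prod>i\<in>UNIV - {j, k}. x i)"
      using jk by (simp add: prod.remove[of UNIV j] prod.remove[of "UNIV - {j}" k] R)
    have py: "(\<Prod>i\<in>UNIV. y i) = y j * y k * (\<Prod>i\<in>UNIV - {j, k}. y i)"
      using jk by (simp add: prod.remove[of UNIV j] prod.remove[of "UNIV - {j}" k] R)
    have rest_s: "(\<Sum>i\<in>UNIV - {j, k}. y i) = (\<Sum>i\<in>UNIV - {j, k}. x i)"
      by (rule sum.cong) (auto simp: y_def)
    have rest_p: "(\<Prod>i\<in>UNIV - {j, k}. y i) = (\<Prod>i\<in>UNIV - {j, k}. x i)"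
      by (rule prod.cong) (auto simp: y_def)
    have restpos: "(\<Prod>i\<in>UNIV - {j, k}. x i) > 0"
      using xpos by (simp add: prod_pos)
    have "x j * x k < m * m"
    proof -
      have "0 < (x j - x k)^2" using ne by simp
      then show ?thesis unfolding m_def by (simp add: power2_eq_square field_simps)
    qed
    then have "(\<Prod>i\<in>UNIV. x i) < (\<Prod>i\<in>UNIV. y i)"
      unfolding px py rest_p using restpos jk by (simp add: y_def)
    also have "\<dots> \<le> ((\<Sum>i\<in>UNIV. y i) / ?n)^?n"
      by (rule amgm) (rule ynn)
    also have "(\<Sum>i\<in>UNIV. y i) = (\<Sum>i\<in>UNIV. x i)"
      unfolding sx sy rest_s using jk by (simp add: y_def m_def)
    also have "((\<Sum>i\<in>UNIV. x i) / ?n)^?n \<le> (1 / ?n)^?n"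
      by (rule power_mono) (use s nn in \<open>auto simp: divide_right_mono sum_nonneg\<close>)
    finally show False using p by simp
  qed
  have "(\<Prod>i\<in>(UNIV::'n set). x i) = (\<Prod>j\<in>(UNIV::'n set). x i)"
    by (rule prod.cong) (auto intro: eq)
  then have 1: "(\<Prod>i\<in>(UNIV::'n set). x i) = x i ^ ?n" by simp
  have "(\<Sum>i\<in>(UNIV::'n set). x i) = (\<Sum>j\<in>(UNIV::'n set). x i)"
    by (rule sum.cong) (auto intro: eq)
  then have 2: "(\<Sum>i\<in>(UNIV::'n set). x i) = ?n * x i" by simp
  from 1 2 have a: "x i ^ ?n \<ge> (1 / ?n)^?n" and b: "?n * x i \<le> 1"
    using p s by auto
  have c: "x i \<ge> 1 / ?n"
    using a nn[of i] by (subst (asm) power_mono_iff) auto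
  have "x i \<le> 1 / ?n" using b by (simp add: field_simps mult.commute)
  then show ?thesis using c by simp
qed

lemma key_orth:
  fixes M :: "real^'n^'n"
  assumes nM: "norm M \<le> 1" and dM: "det M \<noteq> 0"
    and mx: "\<And>N::real^'n^'n. norm N \<le> 1 \<Longrightarrow> (det N)^2 \<le> (det M)^2"
    and ik: "i \<noteq> k"
  shows "M$i \<bullet> M$k = 0"
proof (rule ccontr)
  assume ne: "M$i \<bullet> M$k \<noteq> 0"
  define mi where "mi = M$i"
  define mk where "mk = M$k"
  have mi0: "mi \<noteq> 0" using dM det_zero_row(1)[of i M] by (auto simp: row_eq mi_def)
  then have mimi: "mi \<bullet> mi > 0" by simp
  define \<alpha> where "\<alpha> = (mk \<bullet> mi) / (mi \<bullet> mi)"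
  define w where "w = mk - \<alpha> *\<^sub>R mi"
  have wmi: "mi \<bullet> w = 0" using mimi by (simp add: w_def \<alpha>_def inner_diff_right inner_commute)
  have \<alpha>0: "\<alpha> \<noteq> 0" using ne mimi by (simp add: \<alpha>_def mi_def mk_def inner_commute)
  define ME where "ME e = (\<chi> j. if j = i then mi + e *\<^sub>R w else M$j)" for e
  have Meq: "(\<chi> j. if j = i then mi else M$j) = M" by (simp add: vec_eq_iff mi_def)
  have det0: "det (\<chi> j. if j = i then mk else M$j) = 0"
    by (rule det_identical_rows[OF ik]) (simp add: row_def vec_eq_iff mk_def ik[symmetric])
  have detME: "det (ME e) = det M * (1 - e * \<alpha>)" for e
  proof -
    have "det (ME e) = det (\<chi> j. if j = i then mi else M$j) + det (\<chi> j. if j = i then e *\<^sub>R w else M$j)"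
      unfolding ME_def by (rule det_row_add[where a="\<lambda>j. mi" and b="\<lambda>j. e *\<^sub>R w" and c="\<lambda>j. M$j" and k=i])
    also have "det (\<chi> j. if j = i then e *\<^sub>R w else M$j) = e * det (\<chi> j. if j = i then w else M$j)"
      using det_row_mul[where c=e and a="\<lambda>j. w" and b="\<lambda>j. M$j" and k=i, unfolded scalar_mult_eq_scaleR] by simp
    also have "det (\<chi> j. if j = i then w else M$j) = det (\<chi> j. if j = i then mk else M$j) + det (\<chi> j. if j = i then -(\<alpha> *\<^sub>R mi) else M$j)"
      unfolding w_def using det_row_add[where a="\<lambda>j. mk" and b="\<lambda>j. -(\<alpha> *\<^sub>R mi)" and c="\<lambda>j. M$j" and k=i] by (simp only: diff_conv_add_uminus)
    also have "det (\<chi> j. if j = i then -(\<alpha> *\<^sub>R mi) else M$j) = (-\<alpha>) * det M"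
    proof -
      have "(\<chi> j. if j = i then -(\<alpha> *\<^sub>R mi) else M$j) = (\<chi> j. if j = i then (-\<alpha>) *s mi else M$j)"
        by (simp add: vec_eq_iff)
      then show ?thesis using det_row_mul[where c="-\<alpha>" and a="\<lambda>j. mi" and b="\<lambda>j. M$j" and k=i] Meq by simp
    qed
    finally show ?thesis using Meq det0 by (simp add: algebra_simps)
  qed
  define c where "c = w \<bullet> w"
  have c0: "c \<ge> 0" by (simp add: c_def)
  have normME: "(norm (ME e))^2 = (norm M)^2 + e^2 * c" for e
  proof -
    have a: "(norm (mi + e *\<^sub>R w))^2 = (norm mi)^2 + e^2 * c"
    proof -
      have "(norm (mi + e *\<^sub>R w))^2 = (mi + e *\<^sub>R w) \<bullet> (mi + e *\<^sub>R w)" by (rule power2_norm_eq_inner)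
      also have "\<dots> = mi \<bullet> mi + e^2 * c"
        using wmi by (simp add: inner_add_left inner_add_right inner_commute c_def power2_eq_square)
      also have "mi \<bullet> mi = (norm mi)^2" by (simp add: power2_norm_eq_inner)
      finally show ?thesis .
    qed
    have "(norm (ME e))^2 = (\<Sum>j\<in>UNIV. (norm (ME e $ j))^2)" by (rule norm_sq_mat)
    also have "\<dots> = (norm (ME e $ i))^2 + (\<Sum>j\<in>UNIV-{i}. (norm (ME e $ j))^2)"
      by (simp add: sum.remove)
    also have "(\<Sum>j\<in>UNIV-{i}. (norm (ME e $ j))^2) = (\<Sum>j\<in>UNIV-{i}. (norm (M $ j))^2)"
      by (rule sum.cong) (auto simp: ME_def)
    also have "(norm (M))^2 = (norm (M $ i))^2 + (\<Sum>j\<in>UNIV-{i}. (norm (M $ j))^2)"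
      by (simp add: norm_sq_mat sum.remove)
    ultimately show ?thesis using a by (simp add: ME_def mi_def)
  qed
  let ?n = "CARD('n)"
  have ineq: "(1 - e*\<alpha>)^2 \<le> (1 + e^2 * c)^?n" for e
  proof -
    have pos: "1 + e^2 * c > 0" using c0 by (simp add: add_pos_nonneg)
    define s where "s = 1 / sqrt (1 + e^2 * c)"
    have s2: "s^2 = 1 / (1 + e^2 * c)" using pos by (simp add: s_def power_divide)
    have "(norm (s *\<^sub>R ME e))^2 = s^2 * ((norm M)^2 + e^2 * c)"
      by (simp add: power_mult_distrib normME)
    also have "\<dots> \<le> s^2 * (1 + e^2 * c)"
    proof -
      have "(norm M)^2 \<le> 1" using nM by (simp add: power_le_one)
      then show ?thesis by (intro mult_left_mono) auto
    qed
    also have "\<dots> = 1" using s2 pos by simp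
    finally have "norm (s *\<^sub>R ME e) \<le> 1" by (simp add: power_le_one_iff)
    then have "(det (s *\<^sub>R ME e))^2 \<le> (det M)^2" by (rule mx)
    then have "(s^2)^?n * (det M)^2 * (1 - e * \<alpha>)^2 \<le> (det M)^2"
      by (simp add: det_scaleR_mat detME power_mult_distrib power_mult[symmetric] mult.commute[of 2])
    then have "(1 / (1 + e^2 * c))^?n * (1 - e * \<alpha>)^2 \<le> 1"
      using dM by (simp add: s2 mult.commute mult.left_commute)
    then show ?thesis using pos by (simp add: power_divide field_simps)
  qed
  define f where "f e = (1 + e^2 * c)^?n - (1 - e*\<alpha>)^2" for e
  have "(f has_real_derivative (of_nat ?n * (1 + 0^2 * c)^(?n - 1) * (2 * 0 * c) - 2 * (1 - 0 * \<alpha>) * (- \<alpha>))) (at 0)"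
    unfolding f_def by (rule derivative_eq_intros refl | simp)+
  then have d: "(f has_real_derivative (2 * \<alpha>)) (at 0)" by simp
  have "2 * \<alpha> = 0"
    by (rule DERIV_local_min[OF d, of 1]) (use ineq in \<open>auto simp: f_def\<close>)
  then show False using \<alpha>0 by simp
qed

lemma norm_sq_rows: "(norm (M::real^'n^'k))^2 = (\<Sum>i\<in>UNIV. M$i \<bullet> M$i)"
  by (simp add: norm_sq_mat power2_norm_eq_inner)

lemma norm_mat1: "(norm (mat 1 :: real^'n^'n))^2 = CARD('n)"
proof -
  have "(mat 1 :: real^'n^'n) $ i \<bullet> (mat 1 :: real^'n^'n) $ i = 1" for i
    by (simp add: inner_vec_def mat_def if_distrib cong: if_cong)
  then show ?thesis by (simp add: norm_sq_rows)
qed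

lemma continuous_det: "continuous_on S (\<lambda>N::real^'n^'n. det N)"
  unfolding det_def by (intro continuous_intros continuous_on_component continuous_on_id)

lemma F1:
  fixes M :: "real^'n^'n"
  assumes "norm M \<le> 1"
  shows "(det M)^2 \<le> (1 / CARD('n))^CARD('n)"
proof -
  let ?n = "CARD('n)"
  have cont: "continuous_on (cball 0 1) (\<lambda>N::real^'n^'n. (det N)^2)"
    by (intro continuous_intros continuous_det)
  have ne: "cball (0::real^'n^'n) 1 \<noteq> {}" by simp
  obtain M0 where M0: "M0 \<in> cball (0::real^'n^'n) 1" and mx0: "\<forall>y::real^'n^'n \<in> cball 0 1. (det y)^2 \<le> (det M0)^2"
    using continuous_attains_sup[OF compact_cball ne cont] by blast
  have mx: "(det y)^2 \<le> (det M0)^2" if "y \<in> cball 0 1" for y :: "real^'n^'n" using mx0 that by blast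
  define I0 where "I0 = (1 / sqrt ?n) *\<^sub>R (mat 1 :: real^'n^'n)"
  have "(norm I0)^2 = (1 / sqrt ?n)^2 * (norm (mat 1::real^'n^'n))^2"
    by (simp only: I0_def norm_scaleR power_mult_distrib power2_abs)
  also have "\<dots> = 1" by (simp only: norm_mat1 power_divide) simp
  finally have "(norm I0)^2 = 1" .
  then have nI0: "norm I0 \<le> 1" using norm_ge_zero[of I0] by (auto simp: power2_eq_1_iff)
  have "det I0 = (1 / sqrt ?n)^?n"
    by (simp add: I0_def det_scaleR_mat)
  then have "(det I0)^2 = ((1 / sqrt ?n)^2)^?n"
    by (metis power_mult mult.commute)
  also have "(1 / sqrt ?n)^2 = 1 / ?n" by (simp add: power_divide)
  finally have dI0: "(det I0)^2 = (1 / ?n)^?n" .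
  have dM0: "(1 / ?n)^?n \<le> (det M0)^2" using mx[of I0] nI0 dI0 by simp
  have pos: "(0::real) < (1 / ?n)^?n" by simp
  have d0: "det M0 \<noteq> 0"
  proof
    assume "det M0 = 0"
    then have "(det M0)^2 = 0" by simp
    with dM0 pos show False by linarith
  qed
  have nM0: "norm M0 \<le> 1" using M0 by simp
  have orth: "M0$i \<bullet> M0$k = 0" if "i \<noteq> k" for i k
    by (rule key_orth[OF nM0 d0 _ that]) (use mx in auto)
  have "(det M0)^2 = (\<Prod>i\<in>UNIV. M0$i \<bullet> M0$i)" by (rule det_orth_rows) (use orth in auto)
  also have "\<dots> \<le> ((\<Sum>i\<in>UNIV. M0$i \<bullet> M0$i) / ?n)^?n" by (rule amgm) simp
  also have "\<dots> \<le> (1 / ?n)^?n"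
  proof -
    have "(\<Sum>i\<in>UNIV. M0$i \<bullet> M0$i) \<le> 1"
      using nM0 by (simp add: norm_sq_rows[symmetric] power_le_one)
    then show ?thesis by (intro power_mono divide_right_mono) (auto simp: sum_nonneg)
  qed
  finally show ?thesis using mx[of M] assms by simp
qed

lemma F2:
  fixes M :: "real^'n^'n"
  assumes nM: "norm M \<le> 1" and dM: "(det M)^2 \<ge> (1 / CARD('n))^CARD('n)"
  shows "M ** transpose M = (1 / CARD('n)) *\<^sub>R mat 1"
proof -
  let ?n = "CARD('n)"
  have pos: "(0::real) < (1 / ?n)^?n" by simp
  have d0: "det M \<noteq> 0"
  proof
    assume "det M = 0"
    then have "(det M)^2 = 0" by simp
    with dM pos show False by linarith
  qed
  have orth: "M$i \<bullet> M$k = 0" if "i \<noteq> k" for i k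
    by (rule key_orth[OF nM d0 _ that]) (meson F1 dM order_trans)
  have x: "M$i \<bullet> M$i = 1 / ?n" for i
  proof (rule amgm_eq[where x="\<lambda>i. M$i \<bullet> M$i"])
    show "(\<Sum>i\<in>UNIV. M$i \<bullet> M$i) \<le> 1"
      using nM by (simp add: norm_sq_rows[symmetric] power_le_one)
    have "(det M)^2 = (\<Prod>i\<in>UNIV. M$i \<bullet> M$i)" by (rule det_orth_rows) (use orth in auto)
    then show "(1 / ?n)^?n \<le> (\<Prod>i\<in>UNIV. M$i \<bullet> M$i)" using dM by simp
  qed simp
  show ?thesis
    by (simp add: vec_eq_iff mmt_entry x orth mat_def)
qed

proposition
 fixes f :: "real^'n::finite \<Rightarrow> real^'n::_"
  assumes "linear f" "S \<in> lmeasurable"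
  shows measurable_linear_image_fin: "(f ` S) \<in> lmeasurable"
    and measure_linear_image_fin: "measure lebesgue (f ` S) = \<bar>det (matrix f)\<bar> * measure lebesgue S" (is "?Q f S")
proof -
  have "\<forall>S \<in> lmeasurable. (f ` S) \<in> lmeasurable \<and> ?Q f S"
  proof (rule induct_linear_elementary [OF \<open>linear f\<close>]; intro ballI)
    fix f g and S :: "(real,'n) vec set"
    assume "linear f" and "linear g"
      and f [rule_format]: "\<forall>S \<in> lmeasurable. f ` S \<in> lmeasurable \<and> ?Q f S"
      and g [rule_format]: "\<forall>S \<in> lmeasurable. g ` S \<in> lmeasurable \<and> ?Q g S"
      and S: "S \<in> lmeasurable"
    then have gS: "g ` S \<in> lmeasurable"
      by blast
    show "(f \<circ> g) ` S \<in> lmeasurable \<and> ?Q (f \<circ> g) S"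
      using f [OF gS] g [OF S] matrix_compose [OF \<open>linear g\<close> \<open>linear f\<close>]
      by (simp add: o_def image_comp abs_mult det_mul)
  next
    fix f :: "real^'n::_ \<Rightarrow> real^'n::_" and i and S :: "(real^'n::_) set"
    assume "linear f" and 0: "\<And>x. f x $ i = 0" and "S \<in> lmeasurable"
    then have "\<not> inj f"
      by (metis (full_types) linear_injective_imp_surjective one_neq_zero surjE vec_component)
    have detf: "det (matrix f) = 0"
      using \<open>\<not> inj f\<close> det_nz_iff_inj[OF \<open>linear f\<close>] by blast
    show "f ` S \<in> lmeasurable \<and> ?Q f S"
    proof
      show "f ` S \<in> lmeasurable"
        using lmeasurable_iff_indicator_has_integral \<open>linear f\<close> \<open>\<not> inj f\<close> negligible_UNIV negligible_linear_singular_image by blast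
      have "measure lebesgue (f ` S) = 0"
        by (meson \<open>\<not> inj f\<close> \<open>linear f\<close> negligible_imp_measure0 negligible_linear_singular_image)
      also have "\<dots> = \<bar>det (matrix f)\<bar> * measure lebesgue S"
        by (simp add: detf)
      finally show "?Q f S" .
    qed
  next
    fix c and S :: "(real^'n::_) set"
    assume "S \<in> lmeasurable"
    show "(\<lambda>a. \<chi> i. c i * a $ i) ` S \<in> lmeasurable \<and> ?Q (\<lambda>a. \<chi> i. c i * a $ i) S"
    proof
      show "(\<lambda>a. \<chi> i. c i * a $ i) ` S \<in> lmeasurable"
        by (simp add: \<open>S \<in> lmeasurable\<close> measurable_stretch)
      show "?Q (\<lambda>a. \<chi> i. c i * a $ i) S"
        by (simp add: measure_stretch [OF \<open>S \<in> lmeasurable\<close>, of c] axis_def matrix_def det_diagonal)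
    qed
  next
    fix m :: "'n" and n :: "'n" and S :: "(real, 'n) vec set"
    assume "m \<noteq> n" and "S \<in> lmeasurable"
    let ?h = "\<lambda>v::(real, 'n) vec. \<chi> i. v $ Transposition.transpose m n i"
    have lin: "linear ?h"
      by (rule linearI) (simp_all add: plus_vec_def scaleR_vec_def)
    have meq: "measure lebesgue ((\<lambda>v::(real, 'n) vec. \<chi> i. v $ Transposition.transpose m n i) ` cbox a b)
             = measure lebesgue (cbox a b)" for a b
    proof (cases "cbox a b = {}")
      case True then show ?thesis
        by simp
    next
      case False
      then have him: "?h ` (cbox a b) \<noteq> {}"
        by blast
      have eq: "?h ` (cbox a b) = cbox (?h a) (?h b)"
        by (auto simp: image_iff lambda_swap_Galois mem_box_cart) (metis transpose_involutory)+
      show ?thesis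
        using him prod.permute [OF permutes_swap_id, where S=UNIV and g="\<lambda>i. (b - a)$i", symmetric]
        by (simp add: eq content_cbox_cart False)
    qed
    have "(\<chi> i j. if Transposition.transpose m n i = j then 1 else 0) = (\<chi> i j. if j = Transposition.transpose m n i then 1 else (0::real))"
      by (auto intro!: Cart_lambda_cong)
    then have "matrix ?h = transpose(\<chi> i j. mat 1 $ i $ Transposition.transpose m n j)"
      by (auto simp: matrix_eq transpose_def axis_def mat_def matrix_def)
    then have 1: "\<bar>det (matrix ?h)\<bar> = 1"
      by (simp add: det_permute_columns permutes_swap_id sign_swap_id abs_mult)
    show "?h ` S \<in> lmeasurable \<and> ?Q ?h S"
      using measure_linear_sufficient [OF lin \<open>S \<in> lmeasurable\<close>] meq 1 by force
  next
    fix m n :: "'n" and S :: "(real, 'n) vec set"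
    assume "m \<noteq> n" and "S \<in> lmeasurable"
    let ?h = "\<lambda>v::(real, 'n) vec. \<chi> i. if i = m then v $ m + v $ n else v $ i"
    have lin: "linear ?h"
      by (rule linearI) (auto simp: algebra_simps plus_vec_def scaleR_vec_def vec_eq_iff)
    have 1: "det(matrix ?h) = 1"
    proof -
      have mh: "matrix ?h = (\<chi> i. if i = m then axis m 1 + axis n 1 else axis i (1::real))"
        by (auto simp: matrix_def axis_def vec_eq_iff)
      have "det (\<chi> i. if i = m then axis m 1 + axis n 1 else axis i (1::real)) =
            det (\<chi> i. if i = m then axis m 1 else axis i (1::real)) + det (\<chi> i. if i = m then axis n 1 else axis i (1::real))"
        by (rule det_row_add[where a="\<lambda>i. axis m 1" and b="\<lambda>i. axis n 1" and c="\<lambda>i. axis i 1" and k=m])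
      also have "(\<chi> i. if i = m then axis m 1 else axis i (1::real)) = mat 1"
        by (auto simp: vec_eq_iff axis_def mat_def)
      also have "det (\<chi> i. if i = m then axis n 1 else axis i (1::real)) = 0"
        by (rule det_identical_rows[OF \<open>m \<noteq> n\<close>]) (use \<open>m \<noteq> n\<close> in \<open>simp add: row_def vec_eq_iff\<close>)
      finally show ?thesis using mh by simp
    qed
    have meq: "measure lebesgue (?h ` (cbox a b)) = measure lebesgue (cbox a b)" for a b
    proof (cases "cbox a b = {}")
      case True then show ?thesis by simp
    next
      case False
      then have ne: "(+) (\<chi> i. if i = n then - a $ n else 0) ` cbox a b \<noteq> {}"
        by auto
      let ?v = "\<chi> i. if i = n then - a $ n else 0"
      have "?h ` cbox a b
            = (+) (\<chi> i. if i = m \<or> i = n then a $ n else 0) ` ?h ` (+) ?v ` (cbox a b)"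
        using \<open>m \<noteq> n\<close> unfolding image_comp o_def by (force simp: vec_eq_iff)
      then have "measure lebesgue (?h ` (cbox a b))
               = measure lebesgue ((\<lambda>v. \<chi> i. if i = m then v $ m + v $ n else v $ i) `
                                   (+) ?v ` cbox a b)"
        by (rule ssubst) (rule measure_translation)
      also have "\<dots> = measure lebesgue ((\<lambda>v. \<chi> i. if i = m then v $ m + v $ n else v $ i) ` cbox (?v +a) (?v + b))"
        by (metis (no_types, lifting) cbox_translation)
      also have "\<dots> = measure lebesgue ((+) ?v ` cbox a b)"
        apply (subst measure_shear_interval)
        using \<open>m \<noteq> n\<close> ne apply auto
        apply (simp add: cbox_translation)
        by (metis cbox_borel cbox_translation measure_completion sets_lborel)
      also have "\<dots> = measure lebesgue (cbox a b)"
        by (rule measure_translation)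
        finally show ?thesis .
      qed
    show "?h ` S \<in> lmeasurable \<and> ?Q ?h S"
      using measure_linear_sufficient [OF lin \<open>S \<in> lmeasurable\<close>] meq 1 by force
  qed
  with assms show "(f ` S) \<in> lmeasurable" "?Q f S"
    by metis+
qed

definition sv :: "(real^'n) set" where "sv = {s. \<forall>j. s$j = 1 \<or> s$j = -1}"

lemma finite_sv: "finite (sv::(real^'n) set)"
proof -
  have "sv \<subseteq> range (\<lambda>f::'n\<Rightarrow>bool. (\<chi> j. if f j then 1 else -1) :: real^'n)"
  proof
    fix s :: "real^'n" assume "s \<in> sv"
    then have e: "s = (\<chi> j. if s$j = 1 then 1 else -1)" by (auto simp: sv_def vec_eq_iff)
    show "s \<in> range (\<lambda>f::'n\<Rightarrow>bool. (\<chi> j. if f j then 1 else -1) :: real^'n)"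
      by (rule image_eqI[where x="\<lambda>j. s$j = 1"]) (use e in auto)
  qed
  then show ?thesis by (rule finite_subset) simp
qed

lemma one_sv: "(\<chi> j. 1) \<in> sv" by (simp add: sv_def)

lemma card_sv_pos: "card (sv::(real^'n) set) > 0"
  using finite_sv one_sv card_gt_0_iff by blast

lemma neg_sv: "s \<in> sv \<Longrightarrow> -s \<in> sv" by (auto simp: sv_def)

lemma sv_sq: "s \<in> sv \<Longrightarrow> s$j * s$j = 1" by (auto simp: sv_def dest: spec[of _ j])

lemma sv_pair:
  fixes j l :: "'n::finite"
  shows "(\<Sum>s\<in>sv. s$j * s$l) = (if j = l then real (card (sv::(real^'n) set)) else 0)"
proof (cases "j = l")
  case True
  then show ?thesis by (simp add: sv_sq)
next
  case False
  define fl :: "real^'n \<Rightarrow> real^'n" where "fl s = (\<chi> i. if i = j then - s$i else s$i)" for s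
  have "(\<Sum>s\<in>sv. s$j * s$l) = (\<Sum>s\<in>sv. (fl s)$j * (fl s)$l)"
    by (rule sum.reindex_bij_witness[where i=fl and j=fl]) (auto simp: fl_def sv_def vec_eq_iff)
  also have "\<dots> = - (\<Sum>s\<in>sv. s$j * s$l)"
    using False by (simp add: fl_def sum_negf)
  finally show ?thesis using False by simp
qed

lemma sv_quad:
  fixes a :: "real^'n::finite"
  shows "(\<Sum>s\<in>sv. (a \<bullet> s)^2) = card (sv::(real^'n) set) * (a \<bullet> a)"
proof -
  have "(\<Sum>s\<in>sv. (a \<bullet> s)^2) = (\<Sum>s\<in>sv. \<Sum>j\<in>UNIV. \<Sum>l\<in>UNIV. a$j * a$l * (s$j * s$l))"
    by (rule sum.cong) (simp_all add: inner_vec_def power2_eq_square sum_product algebra_simps)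
  also have "\<dots> = (\<Sum>j\<in>UNIV. \<Sum>s\<in>sv. \<Sum>l\<in>UNIV. a$j * a$l * (s$j * s$l))" by (rule sum.swap)
  also have "\<dots> = (\<Sum>j\<in>UNIV. \<Sum>l\<in>UNIV. \<Sum>s\<in>sv. a$j * a$l * (s$j * s$l))"
    by (rule sum.cong[OF refl], rule sum.swap)
  also have "\<dots> = (\<Sum>j\<in>UNIV. \<Sum>l\<in>UNIV. a$j * a$l * (\<Sum>s\<in>sv. s$j * s$l))"
    by (simp add: sum_distrib_left)
  also have "\<dots> = (\<Sum>j\<in>UNIV. a$j * a$j * card (sv::(real^'n) set))"
    by (rule sum.cong[OF refl]) (simp add: sv_pair if_distrib sum.delta cong: if_cong)
  also have "\<dots> = card (sv::(real^'n) set) * (a \<bullet> a)"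
    by (simp add: inner_vec_def sum_distrib_left algebra_simps)
  finally show ?thesis .
qed

lemma sum_sv_norm: "(\<Sum>s\<in>sv. (norm (X *v s))^2) = card (sv::(real^'n) set) * (norm (X::real^'n^'k))^2"
proof -
  have e: "(norm (X *v s))^2 = (\<Sum>k\<in>UNIV. (X$k \<bullet> s)^2)" for s
    by (simp add: norm_sq_vec matrix_vector_mult_def inner_vec_def)
  have "(\<Sum>s\<in>sv. (norm (X *v s))^2) = (\<Sum>s\<in>sv. \<Sum>k\<in>UNIV. (X$k \<bullet> s)^2)" by (simp add: e)
  also have "\<dots> = (\<Sum>k\<in>UNIV. \<Sum>s\<in>sv. (X$k \<bullet> s)^2)" by (rule sum.swap)
  also have "\<dots> = (\<Sum>k\<in>UNIV. card (sv::(real^'n) set) * (X$k \<bullet> X$k))" by (simp add: sv_quad)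
  also have "\<dots> = card (sv::(real^'n) set) * (norm X)^2" by (simp add: norm_sq_rows sum_distrib_left)
  finally show ?thesis .
qed

lemma sv_norm_le:
  assumes "\<And>s. s \<in> sv \<Longrightarrow> norm ((X::real^'n^'k) *v s) \<le> 1"
  shows "norm X \<le> 1"
proof -
  have "card (sv::(real^'n) set) * (norm X)^2 = (\<Sum>s\<in>sv. (norm (X *v s))^2)" by (simp add: sum_sv_norm)
  also have "\<dots> \<le> (\<Sum>s\<in>(sv::(real^'n) set). 1)"
    by (rule sum_mono) (use assms in \<open>simp add: power_le_one\<close>)
  also have "\<dots> = card (sv::(real^'n) set)" by simp
  finally have "(norm X)^2 \<le> 1" using card_sv_pos[where 'n='n] by simp
  then show ?thesis by (simp add: power_le_one_iff)
qed

lemma l1_iff: "x \<in> l1_ball \<longleftrightarrow> (\<Sum>i\<in>UNIV. \<bar>x$i\<bar>) \<le> 1" by (simp add: l1_ball_def)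

lemma sv_dot_le: "s \<in> sv \<Longrightarrow> s \<bullet> y \<le> (\<Sum>i\<in>UNIV. \<bar>y$i\<bar>)"
  unfolding inner_vec_def
proof (rule sum_mono)
  fix i assume "s \<in> sv"
  then have "s$i = 1 \<or> s$i = -1" by (simp add: sv_def)
  then show "s$i \<bullet> y$i \<le> \<bar>y$i\<bar>" by auto
qed

lemma sv_dot_l1: "s \<in> sv \<Longrightarrow> y \<in> l1_ball \<Longrightarrow> s \<bullet> y \<le> 1"
  using sv_dot_le l1_iff order_trans by blast

lemma convex_l1: "convex (l1_ball :: (real^'n) set)"
proof (rule convexI)
  fix x y :: "real^'n" and u v :: real
  assume x: "x \<in> l1_ball" and y: "y \<in> l1_ball" and u: "0 \<le> u" and v: "0 \<le> v" and uv: "u + v = 1"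
  have "(\<Sum>i\<in>UNIV. \<bar>(u *\<^sub>R x + v *\<^sub>R y)$i\<bar>) \<le> (\<Sum>i\<in>UNIV. u * \<bar>x$i\<bar> + v * \<bar>y$i\<bar>)"
  proof (rule sum_mono)
    fix i
    have "\<bar>u * x$i + v * y$i\<bar> \<le> \<bar>u * x$i\<bar> + \<bar>v * y$i\<bar>" by (rule abs_triangle_ineq)
    then show "\<bar>(u *\<^sub>R x + v *\<^sub>R y)$i\<bar> \<le> u * \<bar>x$i\<bar> + v * \<bar>y$i\<bar>"
      using u v by (simp add: abs_mult)
  qed
  also have "\<dots> = u * (\<Sum>i\<in>UNIV. \<bar>x$i\<bar>) + v * (\<Sum>i\<in>UNIV. \<bar>y$i\<bar>)"
    by (simp add: sum.distrib sum_distrib_left)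
  also have "\<dots> \<le> u * 1 + v * 1"
    using x y u v by (intro add_mono mult_left_mono) (auto simp: l1_iff)
  finally show "u *\<^sub>R x + v *\<^sub>R y \<in> l1_ball" using uv by (simp add: l1_iff)
qed

lemma cube_polar: "(\<And>j. \<bar>x$j\<bar> \<le> 1) \<Longrightarrow> y \<in> l1_ball \<Longrightarrow> x \<bullet> (y::real^'n) \<le> 1"
proof -
  assume c: "\<And>j. \<bar>x$j\<bar> \<le> 1" and y: "y \<in> l1_ball"
  have "x \<bullet> y \<le> (\<Sum>i\<in>UNIV. \<bar>y$i\<bar>)"
    unfolding inner_vec_def
  proof (rule sum_mono)
    fix i
    have "x$i * y$i \<le> \<bar>x$i\<bar> * \<bar>y$i\<bar>" by (metis abs_ge_self abs_mult)
    also have "\<dots> \<le> 1 * \<bar>y$i\<bar>" by (rule mult_right_mono[OF c]) simp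
    finally show "x$i \<bullet> y$i \<le> \<bar>y$i\<bar>" by simp
  qed
  then show ?thesis using y l1_iff by force
qed

lemma ELL:
  fixes Z :: "real^'n^'n"
  assumes sub: "{Z *v u + h | u. norm u \<le> 1} \<subseteq> l1_ball" and s: "s \<in> sv"
  shows "norm (transpose Z *v s) + s \<bullet> h \<le> 1"
proof (cases "transpose Z *v s = 0")
  case True
  have "Z *v 0 + h \<in> {Z *v u + h | u. norm u \<le> 1}" by (rule CollectI, rule exI[of _ 0]) simp
  then have "Z *v 0 + h \<in> l1_ball" using sub by blast
  then show ?thesis using True sv_dot_l1[OF s] by simp
next
  case False
  define v where "v = transpose Z *v s"
  define u where "u = (1 / norm v) *\<^sub>R v"
  have nv: "norm v > 0" using False by (simp add: v_def)
  have "norm u \<le> 1" using nv by (simp add: u_def)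
  then have "Z *v u + h \<in> l1_ball" using sub by blast
  then have "s \<bullet> (Z *v u + h) \<le> 1" by (rule sv_dot_l1[OF s])
  moreover have "s \<bullet> (Z *v u) = v \<bullet> u"
    by (simp add: v_def transpose_matrix_vector dot_lmul_matrix)
  moreover have "v \<bullet> u = norm v"
    using nv by (simp add: u_def power2_norm_eq_inner[symmetric] power2_eq_square)
  ultimately show ?thesis by (simp add: inner_add_right v_def)
qed

lemma ELL2:
  fixes Z :: "real^'n^'n"
  assumes sub: "{Z *v u + h | u. norm u \<le> 1} \<subseteq> l1_ball" and s: "s \<in> sv"
  shows "norm (transpose Z *v s) \<le> 1"
proof -
  have 1: "norm (transpose Z *v s) + s \<bullet> h \<le> 1" by (rule ELL[OF sub s])
  have "norm (transpose Z *v (-s)) + (-s) \<bullet> h \<le> 1" by (rule ELL[OF sub neg_sv[OF s]])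
  moreover have "transpose Z *v (-s) = -(transpose Z *v s)"
    by (simp add: vec_eq_iff matrix_vector_mult_def sum_negf)
  ultimately have 2: "norm (transpose Z *v s) - s \<bullet> h \<le> 1" by simp
  from 1 2 show ?thesis by linarith
qed

lemma ellipsoid_image: "ellipsoid C g = (+) g ` ((*v) C ` cball 0 1)"
  by (force simp: ellipsoid_def image_iff add.commute mem_cball_0)

lemma measure_ellipsoid:
  fixes C :: "real^'n::finite^'n"
  shows "measure lebesgue (ellipsoid C g) = \<bar>det C\<bar> * measure lebesgue (cball (0::real^'n) 1)"
proof -
  have "measure lebesgue ((*v) C ` cball (0::real^'n) 1) = \<bar>det (matrix ((*v) C))\<bar> * measure lebesgue (cball (0::real^'n) 1)"
    by (rule measure_linear_image_fin) (auto simp: matrix_vector_mul_linear lmeasurable_cball)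
  then show ?thesis unfolding ellipsoid_image measure_translation by (simp add: matrix_of_matrix_vector_mul)
qed

lemma cball_pos: "measure lebesgue (cball (0::real^'n) 1) > 0"
proof -
  have "cball (0::real^'n) 1 \<in> sets lborel" by (simp add: borel_closed)
  then show ?thesis using content_cball_pos[of 1 "0::real^'n"] by (simp add: measure_completion)
qed

lemma scaled_id_mult: "((c::real) *\<^sub>R mat 1) *v (x::real^'n) = c *\<^sub>R x"
proof -
  have "((c::real) *\<^sub>R mat 1) *v x = c *\<^sub>R (mat 1 *v x)"
    by (simp add: vec_eq_iff matrix_vector_mult_def sum_distrib_left mult.assoc)
  then show ?thesis by simp
qed

lemma psd_scaled_id: "c \<ge> 0 \<Longrightarrow> psd_matrix (c *\<^sub>R (mat 1 :: real^'n^'n))"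
proof -
  assume c: "c \<ge> 0"
  have "transpose (c *\<^sub>R (mat 1 :: real^'n^'n)) = c *\<^sub>R mat 1" by (simp add: transpose_def mat_def vec_eq_iff)
  then show ?thesis using c by (simp add: psd_matrix_def scaled_id_mult)
qed

lemma E0_sub: "ellipsoid ((1 / sqrt CARD('n)) *\<^sub>R mat 1) 0 \<subseteq> (l1_ball :: (real^'n) set)"
proof
  fix x :: "real^'n" assume "x \<in> ellipsoid ((1 / sqrt CARD('n)) *\<^sub>R mat 1) 0"
  then obtain u :: "real^'n" where u: "norm u \<le> 1" and x: "x = (1 / sqrt CARD('n)) *\<^sub>R u"
    by (auto simp: ellipsoid_def scaled_id_mult)
  define a :: "real^'n" where "a = (\<chi> i. \<bar>u$i\<bar>)"
  define one :: "real^'n" where "one = (\<chi> i. 1)"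
  have "(\<Sum>i\<in>UNIV. \<bar>u$i\<bar>) = a \<bullet> one" by (simp add: a_def one_def inner_vec_def)
  also have "\<dots> \<le> norm a * norm one" by (rule norm_cauchy_schwarz)
  also have "norm a = norm u" by (simp add: a_def norm_vec_def)
  also have "norm one = sqrt CARD('n)" by (simp add: one_def norm_vec_def L2_set_def)
  finally have "(\<Sum>i\<in>UNIV. \<bar>u$i\<bar>) \<le> norm u * sqrt CARD('n)" .
  also have "\<dots> \<le> sqrt CARD('n)" using u by (simp add: mult_left_le_one_le)
  finally have su: "(\<Sum>i\<in>UNIV. \<bar>u$i\<bar>) \<le> sqrt CARD('n)" .
  have "(\<Sum>i\<in>UNIV. \<bar>x$i\<bar>) = (\<Sum>i\<in>UNIV. \<bar>u$i\<bar>) / sqrt CARD('n)"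
    by (simp add: x abs_mult sum_divide_distrib)
  also have "\<dots> \<le> 1" using su by (simp add: divide_le_eq_1)
  finally have "(\<Sum>i\<in>UNIV. \<bar>x$i\<bar>) \<le> 1" .
  then show "x \<in> l1_ball" by (simp only: l1_iff)
qed

lemma sv_dot_self: "s \<in> sv \<Longrightarrow> s \<bullet> s = real CARD('n)" for s :: "real^'n"
  by (simp add: inner_vec_def sv_sq)

lemma dot_transpose: "(transpose M *v x) \<bullet> y = x \<bullet> (M *v y)" for M :: "real^'n^'m"
  by (simp add: transpose_matrix_vector dot_lmul_matrix)

lemma quad_form: "(M *v x) \<bullet> (M *v x) = x \<bullet> ((transpose M ** M) *v x)" for M :: "real^'n^'m"
proof -
  have "(M *v x) \<bullet> (M *v x) = (transpose (transpose M) *v x) \<bullet> (M *v x)" by simp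
  also have "\<dots> = x \<bullet> (transpose M *v (M *v x))" by (rule dot_transpose)
  finally show ?thesis by (simp add: matrix_vector_mul_assoc)
qed

lemma column_mult: "column j (A ** S) = A *v column j S"
  by (simp add: vec_eq_iff matrix_matrix_mult_def matrix_vector_mult_def column_def)

lemma scaleR_mat_vec: "((c::real) *\<^sub>R A) *v (x::real^'n) = c *\<^sub>R (A *v x)" for A :: "real^'n^'m"
  by (simp add: vec_eq_iff matrix_vector_mult_def sum_distrib_left mult.assoc)

lemma det_pos_gram:
  fixes S :: "real^'n^'r"
  assumes inj: "\<And>x. transpose S *v x = 0 \<Longrightarrow> x = 0"
  shows "det (S ** transpose S) > 0"
proof -
  define G where "G = S ** transpose S"
  define f where "f t = det ((1 - t) *\<^sub>R mat 1 + t *\<^sub>R G)" for t :: real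
  have nz: "f t \<noteq> 0" if t: "0 \<le> t" "t \<le> 1" for t
  proof
    assume f0: "f t = 0"
    let ?M = "(1 - t) *\<^sub>R mat 1 + t *\<^sub>R G"
    have "det (matrix ((*v) ?M)) \<noteq> 0 \<longleftrightarrow> inj ((*v) ?M)"
      by (rule det_nz_iff_inj) (simp add: matrix_vector_mul_linear)
    then have "\<not> inj ((*v) ?M)" using f0 by (simp add: f_def matrix_of_matrix_vector_mul)
    then obtain a b where ab: "a \<noteq> b" "?M *v a = ?M *v b" by (auto simp: inj_on_def)
    define x where "x = a - b"
    have x0: "x \<noteq> 0" using ab by (simp add: x_def)
    have Mx: "?M *v x = 0" using ab by (simp add: x_def matrix_vector_mult_diff_distrib)
    have "(transpose S *v x) \<bullet> (transpose S *v x) = x \<bullet> ((transpose (transpose S) ** transpose S) *v x)"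
      by (rule quad_form)
    then have "(transpose S *v x) \<bullet> (transpose S *v x) = x \<bullet> (G *v x)"
      by (simp only: transpose_transpose G_def)
    then have Gx: "x \<bullet> (G *v x) = (transpose S *v x) \<bullet> (transpose S *v x)" by (rule sym)
    have "?M *v x = (1 - t) *\<^sub>R x + t *\<^sub>R (G *v x)"
      by (simp only: matrix_vector_mult_add_rdistrib scaleR_mat_vec matrix_vector_mul_lid)
    then have "0 = x \<bullet> ((1 - t) *\<^sub>R x + t *\<^sub>R (G *v x))" using Mx by simp
    also have "\<dots> = (1 - t) * (x \<bullet> x) + t * ((transpose S *v x) \<bullet> (transpose S *v x))"
      by (simp add: inner_add_right Gx)
    finally have e: "(1 - t) * (x \<bullet> x) + t * ((transpose S *v x) \<bullet> (transpose S *v x)) = 0" by simp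
    have xx: "x \<bullet> x > 0" using x0 by simp
    show False
    proof (cases "t = 1")
      case True
      then have "transpose S *v x = 0" using e by simp
      then show False using inj x0 by blast
    next
      case False
      then have "(1 - t) * (x \<bullet> x) > 0" using t xx by simp
      moreover have "t * ((transpose S *v x) \<bullet> (transpose S *v x)) \<ge> 0" using t by simp
      ultimately show False using e by linarith
    qed
  qed
  have cont: "continuous_on {0..1} f"
  proof -
    have "continuous_on {0..1} (\<lambda>t::real. (1 - t) *\<^sub>R mat 1 + t *\<^sub>R G)"
      by (intro continuous_intros)
    then show ?thesis unfolding f_def by (rule continuous_on_compose2[OF continuous_det[of UNIV]]) simp
  qed
  have f0: "f 0 = 1" by (simp add: f_def)
  show ?thesis
  proof (rule ccontr)
    assume "\<not> det (S ** transpose S) > 0"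
    then have "f 1 \<le> 0" by (simp add: f_def G_def)
    then obtain t where "0 \<le> t" "t \<le> 1" "f t = 0"
      using IVT2'[of f 1 0 0, OF _ _ _ cont] f0 by auto
    then show False using nz by blast
  qed
qed

lemma axis_l1: "\<bar>c\<bar> \<le> 1 \<Longrightarrow> axis j c \<in> (l1_ball :: (real^'n) set)"
proof -
  assume c: "\<bar>c\<bar> \<le> 1"
  have "(\<Sum>i\<in>UNIV. \<bar>axis j c $ i\<bar>) = (\<Sum>i\<in>UNIV. if i = j then \<bar>c\<bar> else 0)"
    by (rule sum.cong) (auto simp: axis_def)
  also have "\<dots> = \<bar>c\<bar>" by simp
  finally show ?thesis using c by (simp add: l1_iff)
qed

lemma extreme_cube:
  fixes x :: "real^'n"
  assumes "x extreme_point_of (polar_wrt l1_ball 0)"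
  shows "x \<in> sv"
proof -
  let ?P = "polar_wrt (l1_ball::(real^'n) set) 0"
  have xP: "x \<in> ?P" and ext: "\<And>a b. a \<in> ?P \<Longrightarrow> b \<in> ?P \<Longrightarrow> x \<notin> open_segment a b"
    using assms by (auto simp: extreme_point_of_def)
  have le: "\<bar>x$j\<bar> \<le> 1" for j
  proof -
    have "x \<bullet> (axis j 1 - 0) \<le> 1" using xP axis_l1[of 1 j] by (auto simp: polar_wrt_def)
    moreover have "x \<bullet> (axis j (-1) - 0) \<le> 1" using xP axis_l1[of "-1" j] by (auto simp: polar_wrt_def)
    ultimately show ?thesis by (simp add: inner_axis)
  qed
  have cubeP: "z \<in> ?P" if "\<And>j. \<bar>z$j\<bar> \<le> 1" for z
    using that by (auto simp: polar_wrt_def cube_polar)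
  show ?thesis
    unfolding sv_def
  proof (intro CollectI allI)
    fix j
    show "x$j = 1 \<or> x$j = -1"
    proof (rule ccontr)
      assume "\<not> (x$j = 1 \<or> x$j = -1)"
      then have lt: "\<bar>x$j\<bar> < 1" using le[of j] by (auto simp: abs_if split: if_splits)
      define \<delta> where "\<delta> = 1 - \<bar>x$j\<bar>"
      have dpos: "\<delta> > 0" using lt by (simp add: \<delta>_def)
      define a where "a = x + \<delta> *\<^sub>R axis j 1"
      define b where "b = x - \<delta> *\<^sub>R axis j 1"
      have aP: "a \<in> ?P"
      proof (rule cubeP)
        fix i show "\<bar>a$i\<bar> \<le> 1"
          using le[of i] by (auto simp: a_def axis_def \<delta>_def abs_if)
      qed
      have bP: "b \<in> ?P"
      proof (rule cubeP)
        fix i show "\<bar>b$i\<bar> \<le> 1"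
          using le[of i] by (auto simp: b_def axis_def \<delta>_def abs_if)
      qed
      have "a \<noteq> b"
      proof
        assume "a = b"
        then have "a$j = b$j" by simp
        then show False using dpos by (simp add: a_def b_def axis_def)
      qed
      then have "midpoint a b \<in> open_segment a b" by (simp add: midpoint_in_open_segment)
      moreover have "midpoint a b = x" by (simp add: midpoint_def a_def b_def vec_eq_iff field_simps)
      ultimately show False using ext[OF aP bP] by simp
    qed
  qed
qed

lemma frontier_polar_ell:
  fixes C :: "real^'n^'n"
  assumes symm: "transpose C = C" and nx: "norm (C *v x) = 1"
  shows "x \<in> frontier (polar_wrt (ellipsoid C 0) 0)"
proof -
  let ?P = "polar_wrt (ellipsoid C 0) 0"
  have dz: "z \<bullet> (C *v u) = (C *v z) \<bullet> u" for z u
    using dot_transpose[of C z u] symm by simp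
  have mem: "z \<in> ?P \<longleftrightarrow> (\<forall>u. norm u \<le> 1 \<longrightarrow> (C *v z) \<bullet> u \<le> 1)" for z
    by (auto simp: polar_wrt_def ellipsoid_def dz)
  have xP: "x \<in> ?P"
    unfolding mem
  proof (intro allI impI)
    fix u :: "real^'n" assume "norm u \<le> 1"
    have "(C *v x) \<bullet> u \<le> norm (C *v x) * norm u" by (rule norm_cauchy_schwarz)
    also have "\<dots> \<le> 1" using nx \<open>norm u \<le> 1\<close> by simp
    finally show "(C *v x) \<bullet> u \<le> 1" .
  qed
  have "x \<noteq> 0" using nx by auto
  then have nxpos: "norm x > 0" by simp
  have "x \<notin> interior ?P"
  proof
    assume "x \<in> interior ?P"
    then obtain e where e: "e > 0" "ball x e \<subseteq> ?P" by (auto simp: mem_interior)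
    define \<delta> where "\<delta> = e / (2 * norm x)"
    have dpos: "\<delta> > 0" using e nxpos by (simp add: \<delta>_def)
    define z where "z = (1 + \<delta>) *\<^sub>R x"
    have "dist x z = \<delta> * norm x" using dpos by (simp add: z_def dist_norm algebra_simps)
    also have "\<dots> = e / 2" using nxpos by (simp add: \<delta>_def)
    finally have "z \<in> ball x e" using e by simp
    then have "z \<in> ?P" using e by blast
    moreover have "norm (C *v x) \<le> 1" using nx by simp
    ultimately have "(C *v z) \<bullet> (C *v x) \<le> 1" using mem by blast
    moreover have "(C *v z) \<bullet> (C *v x) = (1 + \<delta>) * ((C *v x) \<bullet> (C *v x))"
      by (simp add: z_def matrix_vector_mult_scaleR)
    moreover have "(C *v x) \<bullet> (C *v x) = 1" using nx by (simp add: power2_norm_eq_inner[symmetric])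
    ultimately show False using dpos by simp
  qed
  then show ?thesis using xP closure_subset by (auto simp: frontier_def)
qed

lemma sum_if_card: "(\<Sum>k\<in>UNIV. if P k then 1 else (0::real)) = real (card {k::'n::finite. P k})"
proof -
  have "(\<Sum>k\<in>{k\<in>UNIV. P k}. (1::real)) = (\<Sum>k\<in>UNIV. if P k then 1 else 0)"
    by (rule sum.inter_filter) simp
  then show ?thesis by simp
qed

lemma signed_perm:
  fixes N :: "real^'n^'n"
  assumes svN: "\<And>s. s \<in> sv \<Longrightarrow> N *v s \<in> sv" and orth: "transpose N ** N = mat 1"
  shows "\<exists>Q D. permutation_matrix Q \<and> sign_diagonal D \<and> transpose N = D ** Q \<and> transpose D = D"
proof -
  define one :: "real^'n" where "one = (\<chi> j. 1)"
  define si :: "'n \<Rightarrow> real^'n" where "si i = (\<chi> j. if j = i then -1 else 1)" for i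
  have one_sv: "one \<in> sv" by (simp add: one_def sv_def)
  have si_sv: "si i \<in> sv" for i by (simp add: si_def sv_def)
  have ax: "axis i 1 = (1/2) *\<^sub>R (one - si i)" for i
    by (simp add: vec_eq_iff axis_def one_def si_def)
  have Nax: "(N *v axis i 1)$k = N$k$i" for i k
    by (simp add: matrix_vector_mult_def axis_def if_distrib[of "\<lambda>z. N$k$_ * z"] cong: if_cong)
  have ent: "N$k$i = 1 \<or> N$k$i = 0 \<or> N$k$i = -1" for k i
  proof -
    have "N *v axis i 1 = (1/2) *\<^sub>R (N *v one - N *v si i)"
      by (simp add: ax matrix_vector_mult_scaleR matrix_vector_mult_diff_distrib)
    then have "N$k$i = (1/2) * ((N *v one)$k - (N *v si i)$k)" using Nax[of i k] by simp
    moreover have "(N *v one)$k = 1 \<or> (N *v one)$k = -1" using svN[OF one_sv] by (simp add: sv_def)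
    moreover have "(N *v si i)$k = 1 \<or> (N *v si i)$k = -1" using svN[OF si_sv] by (simp add: sv_def)
    ultimately show ?thesis by auto
  qed
  have gram: "(\<Sum>k\<in>UNIV. N$k$i * N$k$i') = (if i = i' then 1 else 0)" for i i'
  proof -
    have "(transpose N ** N)$i$i' = (\<Sum>k\<in>UNIV. N$k$i * N$k$i')"
      by (simp add: matrix_matrix_mult_def transpose_def)
    then show ?thesis using orth by (simp add: mat_def)
  qed
  have uniq: "\<exists>!k. N$k$i \<noteq> 0" for i
  proof -
    have sq: "N$k$i * N$k$i = (if N$k$i \<noteq> 0 then 1 else 0)" for k
      using ent[of k i] by auto
    have "real (card {k. N$k$i \<noteq> 0}) = 1"
      using gram[of i i] by (simp add: sq sum_if_card)
    then have "card {k. N$k$i \<noteq> 0} = 1" by simp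
    then obtain k0 where "{k. N$k$i \<noteq> 0} = {k0}" by (rule card_1_singletonE)
    then show ?thesis by (auto simp: set_eq_iff)
  qed
  define p where "p i = (THE k. N$k$i \<noteq> 0)" for i
  have pnz: "N$(p i)$i \<noteq> 0" for i unfolding p_def by (rule theI'[OF uniq])
  have puniq: "k = p i" if "N$k$i \<noteq> 0" for k i
    using uniq[of i] pnz[of i] that by blast
  define d where "d i = N$(p i)$i" for i
  have dpm: "d i = 1 \<or> d i = -1" for i using ent[of "p i" i] pnz[of i] by (auto simp: d_def)
  have Nk: "N$k$i = (if k = p i then d i else 0)" for k i
    using puniq[of k i] by (auto simp: d_def)
  have injp: "inj p"
  proof (rule injI)
    fix i i' assume eq: "p i = p i'"
    show "i = i'"
    proof (rule ccontr)
      assume ne: "i \<noteq> i'"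
      have "(\<Sum>k\<in>UNIV. N$k$i * N$k$i') = (\<Sum>k\<in>UNIV. if k = p i then d i * d i' else 0)"
        by (rule sum.cong) (auto simp: Nk eq)
      also have "\<dots> = d i * d i'" by simp
      finally have "d i * d i' = 0" using gram[of i i'] ne by simp
      then show False using dpm[of i] dpm[of i'] by auto
    qed
  qed
  have "surj p" using injp by (simp add: finite_UNIV_inj_surj)
  then have perm: "p permutes (UNIV :: 'n set)"
    using injp by (intro bij_imp_permutes) (auto simp: bij_betw_def)
  define Q :: "real^'n^'n" where "Q = (\<chi> i j. if p i = j then 1 else 0)"
  define D :: "real^'n^'n" where "D = (\<chi> i j. if i = j then d i else 0)"
  have PQ: "permutation_matrix Q" unfolding permutation_matrix_def Q_def using perm by blast
  have SD: "sign_diagonal D" unfolding sign_diagonal_def D_def using dpm by blast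
  have DQ: "D ** Q = transpose N"
  proof -
    have "(D ** Q)$i$j = (transpose N)$i$j" for i j
    proof -
      have "(D ** Q)$i$j = (\<Sum>k\<in>UNIV. (if i = k then d i else 0) * (if p k = j then 1 else 0))"
        by (simp add: matrix_matrix_mult_def D_def Q_def)
      also have "\<dots> = (\<Sum>k\<in>UNIV. if k = i then d i * (if p i = j then 1 else 0) else 0)"
        by (rule sum.cong) auto
      also have "\<dots> = d i * (if p i = j then 1 else 0)" by simp
      also have "\<dots> = (transpose N)$i$j" by (simp add: transpose_def Nk)
      finally show ?thesis .
    qed
    then show ?thesis by (simp add: vec_eq_iff)
  qed
  have DT: "transpose D = D" by (simp add: D_def transpose_def vec_eq_iff)
  show ?thesis using PQ SD DQ DT by metis
qed

lemma smult_l: "((c::real) *\<^sub>R A) ** B = c *\<^sub>R (A ** B)" for A :: "real^'n^'m" and B :: "real^'k^'n"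
  by (simp add: vec_eq_iff matrix_matrix_mult_def sum_distrib_left mult.assoc)

lemma smult_r: "A ** ((c::real) *\<^sub>R B) = c *\<^sub>R (A ** B)" for A :: "real^'n^'m" and B :: "real^'k^'n"
  by (simp add: vec_eq_iff matrix_matrix_mult_def sum_distrib_left algebra_simps)

theorem theorem3:
  fixes Hg :: "real^'r^'m" and Sg :: "real^'n^'r"
    and Hs :: "real^'r^'m" and Ss :: "real^'n^'r"
  assumes "CARD('r) \<le> CARD('m)" and "CARD('r) \<le> CARD('n)"
    and "rank Hg = CARD('r)"
    and "\<forall>j. column j Sg \<in> l1_ball"
    and "sufficiently_scattered l1_ball Sg"
    and "detmax_optimal (Hg ** Sg) l1_ball Hs Ss"
  shows "\<exists>Q D. permutation_matrix Q \<and> sign_diagonal D \<and>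
           Hs = Hg ** transpose Q ** D \<and> Ss = D ** Q ** Sg"
proof -
  let ?n = "CARD('r)"
  let ?K = "convex hull (columns Sg)"
  from assms(5) obtain C g where mv: "is_MVIE l1_ball C g" and K1: "?K \<subseteq> l1_ball"
    and K2: "ellipsoid C g \<subseteq> ?K"
    and pol: "polar_wrt ?K g \<inter> frontier (polar_wrt (ellipsoid C g) g)
               = {x. x extreme_point_of (polar_wrt l1_ball g)}"
    unfolding sufficiently_scattered_def by blast
  have psdC: "psd_matrix C" and Esub: "ellipsoid C g \<subseteq> l1_ball"
    and maxE: "\<And>(C'::real^'r^'r) g'. psd_matrix C' \<Longrightarrow> ellipsoid C' g' \<subseteq> l1_ball \<Longrightarrow>
        measure lebesgue (ellipsoid C' g') \<le> measure lebesgue (ellipsoid C g)"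
    using mv by (auto simp: is_MVIE_def)
  have CT: "transpose C = C" using psdC by (simp add: psd_matrix_def)
  \<comment> \<open>Step 1: determinant bound from maximality\<close>
  define c0 where "c0 = 1 / sqrt ?n"
  have "measure lebesgue (ellipsoid (c0 *\<^sub>R mat 1) (0::real^'r)) \<le> measure lebesgue (ellipsoid C g)"
    by (rule maxE) (use E0_sub[where 'n='r] psd_scaled_id[where 'n='r, of c0] in \<open>auto simp: c0_def\<close>)
  then have "\<bar>det (c0 *\<^sub>R (mat 1::real^'r^'r))\<bar> * measure lebesgue (cball (0::real^'r) 1)
      \<le> \<bar>det C\<bar> * measure lebesgue (cball (0::real^'r) 1)"
    by (simp only: measure_ellipsoid)
  then have "\<bar>det (c0 *\<^sub>R (mat 1::real^'r^'r))\<bar> \<le> \<bar>det C\<bar>"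
    using cball_pos[where 'n='r] by simp
  then have c0C: "c0 ^ ?n \<le> \<bar>det C\<bar>" by (simp add: det_scaleR_mat c0_def)
  have dC: "(det C)^2 \<ge> (1 / ?n)^?n"
  proof -
    have "(1 / ?n)^?n = ((c0)^2)^?n" by (simp add: c0_def power_divide)
    also have "\<dots> = (c0 ^ ?n)^2" by (simp add: power_mult[symmetric] mult.commute)
    also have "\<dots> \<le> \<bar>det C\<bar>^2" by (rule power_mono[OF c0C]) (simp add: c0_def)
    finally show ?thesis by simp
  qed
  have Eset: "{C *v u + g | u. norm u \<le> 1} \<subseteq> l1_ball" using Esub by (simp add: ellipsoid_def)
  have nC: "norm C \<le> 1"
    by (rule sv_norm_le) (use ELL2[OF Eset] CT in auto)
  have CC: "C ** C = (1 / ?n) *\<^sub>R mat 1" using F2[OF nC dC] CT by simp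
  have CCv: "C *v (C *v x) = (1 / ?n) *\<^sub>R x" for x
    by (simp add: matrix_vector_mul_assoc CC scaled_id_mult)
  have CxCx: "(C *v x) \<bullet> (C *v x) = (1 / ?n) * (x \<bullet> x)" for x
    using quad_form[of C x] CT by (simp add: CC scaled_id_mult)
  have nCs: "norm (C *v s) = 1" if "s \<in> sv" for s
  proof -
    have "(C *v s) \<bullet> (C *v s) = 1" using sv_dot_self[OF that] by (simp add: CxCx)
    then show ?thesis by (simp add: norm_eq_sqrt_inner)
  qed
  have sg: "s \<bullet> g = 0" if s: "s \<in> sv" for s
  proof -
    have "norm (transpose C *v s) + s \<bullet> g \<le> 1" by (rule ELL[OF Eset s])
    moreover have "norm (transpose C *v (-s)) + (-s) \<bullet> g \<le> 1" by (rule ELL[OF Eset neg_sv[OF s]])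
    moreover have "transpose C *v (-s) = -(transpose C *v s)"
      by (simp add: vec_eq_iff matrix_vector_mult_def sum_negf)
    ultimately show ?thesis using nCs[OF s] CT by simp
  qed
  have g0: "g = 0"
  proof -
    have "g$i = 0" for i
    proof -
      define one :: "real^'r" where "one = (\<chi> j. 1)"
      define si :: "real^'r" where "si = (\<chi> j. if j = i then -1 else 1)"
      have "one \<in> sv" "si \<in> sv" by (simp_all add: one_def si_def sv_def)
      then have "(one - si) \<bullet> g = 0" using sg by (simp add: inner_diff_left)
      moreover have "one - si = 2 *\<^sub>R axis i 1" by (simp add: vec_eq_iff one_def si_def axis_def)
      ultimately show ?thesis by (simp add: inner_axis inner_commute)
    qed
    then show ?thesis by (simp add: vec_eq_iff)
  qed
  have HS: "Hg ** Sg = Hs ** Ss" and colSs: "\<And>j. column j Ss \<in> l1_ball"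
    using assms(6) by (auto simp: detmax_optimal_def detmax_feasible_def)
  have feas: "detmax_feasible (Hg ** Sg) l1_ball Hg Sg" using assms(4) by (simp add: detmax_feasible_def)
  have opt: "det (Sg ** transpose Sg) \<le> det (Ss ** transpose Ss)"
    using assms(6) feas by (auto simp: detmax_optimal_def)
  obtain L where L: "L ** Hg = mat 1"
    using assms(3) by (auto simp: full_rank_injective matrix_left_invertible_injective[symmetric])
  define B where "B = L ** Hs"
  have SgB: "Sg = B ** Ss"
  proof -
    have "Sg = (L ** Hg) ** Sg" by (simp add: L)
    also have "\<dots> = L ** (Hg ** Sg)" by (simp add: matrix_mul_assoc)
    also have "\<dots> = L ** (Hs ** Ss)" by (simp only: HS)
    finally show ?thesis by (simp add: B_def matrix_mul_assoc)
  qed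
  have injSg: "x = 0" if x0: "transpose Sg *v x = 0" for x
  proof -
    have colx: "y \<in> {y. x \<bullet> y = 0}" if "y \<in> columns Sg" for y
    proof -
      obtain j where y: "y = column j Sg" using \<open>y \<in> columns Sg\<close> by (auto simp: columns_def)
      have "(transpose Sg *v x)$j = x \<bullet> y"
        by (simp add: y matrix_vector_mult_def transpose_def inner_vec_def column_def mult.commute)
      then show ?thesis using x0 by simp
    qed
    have hull: "?K \<subseteq> {y. x \<bullet> y = 0}"
      by (rule hull_minimal) (use colx convex_hyperplane in auto)
    define u where "u = (1 / (norm (C *v x) + 1)) *\<^sub>R (C *v x)"
    have nu: "norm u \<le> 1"
    proof -
      have pos: "norm (C *v x) + 1 > 0" by (simp add: add_nonneg_pos)
      then have "norm u = norm (C *v x) / (norm (C *v x) + 1)" by (simp add: u_def)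
      also have "\<dots> \<le> 1" using pos by (simp add: divide_le_eq_1)
      finally show ?thesis .
    qed
    have "C *v u + g \<in> ellipsoid C g" using nu by (auto simp: ellipsoid_def)
    then have "x \<bullet> (C *v u + g) = 0" using K2 hull by blast
    then have "x \<bullet> (C *v u) = 0" using g0 by simp
    moreover have "x \<bullet> (C *v u) = (1 / (norm (C *v x) + 1)) * ((1 / ?n) * (x \<bullet> x))"
      by (simp add: u_def matrix_vector_mult_scaleR CCv)
    ultimately have e: "(1 / (norm (C *v x) + 1)) * ((1 / ?n) * (x \<bullet> x)) = 0" by simp
    have a: "1 / (norm (C *v x) + 1) > 0" by (simp add: add_nonneg_pos)
    have b: "1 / real ?n > 0" by simp
    have "x \<bullet> x = 0" using e a b by (metis mult_eq_0_iff order_less_irrefl)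
    then show ?thesis by simp
  qed
  have Gpos: "det (Sg ** transpose Sg) > 0" by (rule det_pos_gram) (rule injSg)
  have detrel: "det (Sg ** transpose Sg) = (det B)^2 * det (Ss ** transpose Ss)"
  proof -
    have "Sg ** transpose Sg = B ** (Ss ** transpose Ss) ** transpose B"
      by (simp add: SgB matrix_transpose_mul matrix_mul_assoc)
    then show ?thesis by (simp add: det_mul power2_eq_square)
  qed
  have Gs: "det (Ss ** transpose Ss) > 0"
  proof (rule ccontr)
    assume "\<not> det (Ss ** transpose Ss) > 0"
    then have "(det B)^2 * det (Ss ** transpose Ss) \<le> 0"
      by (simp add: mult_nonneg_nonpos)
    then show False using Gpos detrel by simp
  qed
  have dB1: "(det B)^2 \<le> 1" using opt detrel Gs by (simp add: mult_le_cancel_right2)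
  have dB0: "det B \<noteq> 0" using Gpos detrel by auto
  obtain A where AB: "B ** A = mat 1" and BA: "A ** B = mat 1"
    using dB0 invertible_det_nz[of B] by (auto simp: invertible_def)
  have SsA: "Ss = A ** Sg"
    by (simp add: SgB matrix_mul_assoc BA)
  have dAB: "det A * det B = 1" using BA by (metis det_I det_mul)
  have dA: "(det A)^2 \<ge> 1"
  proof -
    have "(det A)^2 * (det B)^2 = 1" using dAB by (metis power_mult_distrib power_one)
    moreover have "(det B)^2 > 0" using dB0 by simp
    ultimately have "(det A)^2 = 1 / (det B)^2" by (simp add: eq_divide_eq)
    then show ?thesis using dB1 dB0 by (simp add: le_divide_eq_1)
  qed
  have HgA: "Hg = Hs ** A"
  proof -
    have "Hg ** (Sg ** transpose Sg) = (Hs ** A) ** (Sg ** transpose Sg)"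
      using HS SsA by (simp add: matrix_mul_assoc)
    moreover obtain Gi where "(Sg ** transpose Sg) ** Gi = mat 1"
      using Gpos invertible_det_nz[of "Sg ** transpose Sg"] by (auto simp: invertible_def)
    ultimately show ?thesis by (metis matrix_mul_assoc matrix_mul_rid)
  qed
  have HsB: "Hs = Hg ** B" using HgA BA by (simp add: matrix_mul_assoc[symmetric])
  have Aimg: "(*v) A ` columns Sg \<subseteq> l1_ball"
  proof
    fix z assume "z \<in> (*v) A ` columns Sg"
    then obtain j where "z = A *v column j Sg" by (auto simp: columns_def)
    then have "z = column j Ss" by (simp add: SsA column_mult)
    then show "z \<in> l1_ball" using colSs by simp
  qed
  have Acol: "A *v y \<in> l1_ball" if "y \<in> ?K" for y
  proof -
    have "(*v) A ` ?K = convex hull ((*v) A ` columns Sg)"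
      by (rule convex_hull_linear_image) (rule matrix_vector_mul_linear)
    also have "\<dots> \<subseteq> l1_ball" by (rule hull_minimal[where S=convex, OF Aimg convex_l1])
    finally show ?thesis using that by blast
  qed
  have AEset: "{(A ** C) *v u + A *v g | u. norm u \<le> 1} \<subseteq> l1_ball"
  proof
    fix z assume "z \<in> {(A ** C) *v u + A *v g | u. norm u \<le> 1}"
    then obtain u where u: "norm u \<le> 1" and z: "z = (A ** C) *v u + A *v g" by blast
    have "C *v u + g \<in> ?K" using K2 u by (auto simp: ellipsoid_def)
    then have "A *v (C *v u + g) \<in> l1_ball" by (rule Acol)
    then show "z \<in> l1_ball" by (simp add: z matrix_vector_right_distrib matrix_vector_mul_assoc)
  qed
  have nX: "norm (transpose (A ** C)) \<le> 1"
    by (rule sv_norm_le) (rule ELL2[OF AEset])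
  have dX: "(det (transpose (A ** C)))^2 \<ge> (1 / ?n)^?n"
  proof -
    have "(1 / ?n)^?n \<le> 1 * (det C)^2" using dC by simp
    also have "\<dots> \<le> (det A)^2 * (det C)^2" by (rule mult_right_mono[OF dA]) simp
    also have "\<dots> = (det (transpose (A ** C)))^2" by (simp add: det_mul power_mult_distrib)
    finally show ?thesis .
  qed
  have XX: "transpose (A ** C) ** transpose (transpose (A ** C)) = (1 / ?n) *\<^sub>R mat 1"
    by (rule F2[OF nX dX])
  then have CTC: "C ** (transpose A ** A) ** C = (1 / ?n) *\<^sub>R mat 1"
    by (simp add: matrix_transpose_mul CT matrix_mul_assoc)
  have ATA: "transpose A ** A = mat 1"
  proof -
    let ?T = "transpose A ** A"
    let ?c = "1 / real ?n"
    have "C ** (C ** ?T ** C) ** C = (C ** C) ** ?T ** (C ** C)" by (simp add: matrix_mul_assoc)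
    also have "\<dots> = (?c *\<^sub>R mat 1) ** ?T ** (?c *\<^sub>R mat 1)" by (simp only: CC)
    also have "\<dots> = (?c * ?c) *\<^sub>R ?T" by (simp add: smult_l smult_r)
    finally have 1: "C ** (C ** ?T ** C) ** C = (?c * ?c) *\<^sub>R ?T" .
    have "C ** (C ** ?T ** C) ** C = C ** (?c *\<^sub>R mat 1) ** C" by (simp only: CTC)
    also have "\<dots> = ?c *\<^sub>R (C ** C)" by (simp add: smult_l smult_r)
    also have "\<dots> = (?c * ?c) *\<^sub>R mat 1" by (simp add: CC)
    finally have "(?c * ?c) *\<^sub>R ?T = (?c * ?c) *\<^sub>R (mat 1::real^'r^'r)" using 1 by simp
    then show ?thesis by simp
  qed
  have AAT: "A ** transpose A = mat 1" using ATA matrix_left_right_inverse by blast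
  have svN: "transpose A *v s \<in> sv" if s: "s \<in> sv" for s
  proof -
    define x0 where "x0 = transpose A *v s"
    have inK: "x0 \<in> polar_wrt ?K g"
    proof -
      have "x0 \<bullet> (y - 0) \<le> 1" if "y \<in> ?K" for y
      proof -
        have "x0 \<bullet> y = s \<bullet> (A *v y)" unfolding x0_def by (rule dot_transpose)
        also have "\<dots> \<le> 1" by (rule sv_dot_l1[OF s Acol[OF that]])
        finally show ?thesis by simp
      qed
      then show ?thesis by (simp add: polar_wrt_def g0)
    qed
    have "x0 \<bullet> x0 = s \<bullet> ((transpose (transpose A) ** transpose A) *v s)"
      unfolding x0_def by (rule quad_form)
    also have "\<dots> = ?n" using AAT sv_dot_self[OF s] by simp
    finally have "(C *v x0) \<bullet> (C *v x0) = 1" by (simp add: CxCx)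
    then have "norm (C *v x0) = 1" by (simp add: norm_eq_sqrt_inner)
    then have "x0 \<in> frontier (polar_wrt (ellipsoid C g) g)"
      using frontier_polar_ell[OF CT] g0 by simp
    with inK pol have "x0 extreme_point_of (polar_wrt l1_ball g)" by blast
    then show ?thesis unfolding x0_def using extreme_cube g0 by blast
  qed
  have "transpose (transpose A) ** transpose A = mat 1" using AAT by simp
  then obtain Q D where PQ: "permutation_matrix Q" and SD: "sign_diagonal D"
    and AQ: "transpose (transpose A) = D ** Q" and DT: "transpose D = D"
    using signed_perm[of "transpose A"] svN by blast
  have ADQ: "A = D ** Q" using AQ by simp
  have BAt: "B = transpose A"
  proof -
    have "B = (transpose A ** A) ** B" by (simp add: ATA)
    also have "\<dots> = transpose A" by (simp add: matrix_mul_assoc[symmetric] BA)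
    finally show ?thesis .
  qed
  have "Hs = Hg ** transpose Q ** D"
    by (simp add: HsB BAt ADQ matrix_transpose_mul DT matrix_mul_assoc)
  moreover have "Ss = D ** Q ** Sg" by (simp add: SsA ADQ)
  ultimately show ?thesis using PQ SD by blast
qed

end
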